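(* Let $(S,|\cdot|)$ be a finite metric space with $n\ge3$ points, $t\ge 1$, $G'=(S,E')$ a $t$-spanner for $S$, and $G=(S,E)$ the graph obtained from $G'$ by the construction in the context with $f=1$. Let $F\subseteq E$ be a matching in $G$ (i.e., $(S,F)$ has maximum degree at most $1$). Let $p,q\in S$ and let $P'$ be a shortest path between $p$ and $q$ in $G'$. Suppose that at least one edge of $P'$ belongs to $F$ and that $P'$ has at least two edges. Then $G\setminus F$ contains a walk between $p$ and $q$ whose length is at most $3|P'|$, where $|P'|$ is the sum of the weights of the edges of $P'$.
   Context: For a finite metric space $(S,|\cdot|)$, $K_S$ denotes the complete graph on $S$ with edge weights $|pq|$; all graphs on $S$ have edge weights $|pq|$. For a set $F$ of edges, $X\setminus F$ is the graph with the same vertex set as $X$ and edge set $E_X\setminus F$. A graph $G'=(S,E')$ is a $t$-spanner for $S$ if the shortest-path distance in $G'$ satisfies $\delta_{G'}(p,q)\le t|pq|$ for all $p,q$. The length of a walk is the sum of its edge weights. Construction (general $f$ with $1\le f\le (n-1)/2$): for each edge $\{a,b\}\in E'$, list the points of $S\setminus\{a,b\}$ as $c_1,\dots,c_{n-2}$ in non-decreasing order of $|ac_i|+|c_ib|$ (ties broken arbitrarily) and let $C_{ab}=\{c_1,\dots,c_{2f-1}\}$; then $G=(S,E)$ with $E=E'\cup\{\{a,c\},\{c,b\}:\{a,b\}\in E',\ c\in C_{ab}\}$. For $f=1$, $C_{ab}$ consists of a single point minimizing $|ac|+|cb|$ over $c\in S\setminus\{a,b\}$. *)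

theory Defs
  imports Main "HOL-Library.Extended_Real"
begin

definition metric_on :: "'a set \<Rightarrow> ('a \<Rightarrow> 'a \<Rightarrow> real) \<Rightarrow> bool" where
  "metric_on S d \<longleftrightarrow>
     (\<forall>x\<in>S. \<forall>y\<in>S. d x y \<ge> 0 \<and> (d x y = 0 \<longleftrightarrow> x = y) \<and> d x y = d y x) \<and>
     (\<forall>x\<in>S. \<forall>y\<in>S. \<forall>z\<in>S. d x z \<le> d x y + d y z)"

definition graph_on :: "'a set \<Rightarrow> 'a set set \<Rightarrow> bool" where
  "graph_on S E \<longleftrightarrow> (\<forall>e\<in>E. \<exists>a b. e = {a, b} \<and> a \<in> S \<and> b \<in> S \<and> a \<noteq> b)"

definition walk :: "'a set \<Rightarrow> 'a set set \<Rightarrow> 'a list \<Rightarrow> bool" where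
  "walk S E xs \<longleftrightarrow> xs \<noteq> [] \<and> set xs \<subseteq> S \<and>
     (\<forall>i. Suc i < length xs \<longrightarrow> {xs ! i, xs ! Suc i} \<in> E)"

definition walk_between :: "'a set \<Rightarrow> 'a set set \<Rightarrow> 'a \<Rightarrow> 'a \<Rightarrow> 'a list \<Rightarrow> bool" where
  "walk_between S E p q xs \<longleftrightarrow> walk S E xs \<and> hd xs = p \<and> last xs = q"

definition walk_len :: "('a \<Rightarrow> 'a \<Rightarrow> real) \<Rightarrow> 'a list \<Rightarrow> real" where
  "walk_len d xs = (\<Sum>i<length xs - 1. d (xs ! i) (xs ! Suc i))"

text \<open>Shortest-path distance in the graph (S,E), infinite if no walk exists.\<close>
definition graph_dist :: "'a set \<Rightarrow> 'a set set \<Rightarrow> ('a \<Rightarrow> 'a \<Rightarrow> real) \<Rightarrow> 'a \<Rightarrow> 'a \<Rightarrow> ereal" where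
  "graph_dist S E d p q = Inf {ereal (walk_len d xs) | xs. walk_between S E p q xs}"

definition is_spanner :: "'a set \<Rightarrow> 'a set set \<Rightarrow> ('a \<Rightarrow> 'a \<Rightarrow> real) \<Rightarrow> real \<Rightarrow> bool" where
  "is_spanner S E d t \<longleftrightarrow> (\<forall>p\<in>S. \<forall>q\<in>S. graph_dist S E d p q \<le> ereal (t * d p q))"

definition shortest_path :: "'a set \<Rightarrow> 'a set set \<Rightarrow> ('a \<Rightarrow> 'a \<Rightarrow> real) \<Rightarrow> 'a \<Rightarrow> 'a \<Rightarrow> 'a list \<Rightarrow> bool" where
  "shortest_path S E d p q P \<longleftrightarrow> walk_between S E p q P \<and> distinct P \<and>
     ereal (walk_len d P) = graph_dist S E d p q"

text \<open>Construction with f = 1: c chooses, for each edge {a,b} of E', a point of S-{a,b}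
  minimising |ac|+|cb| (ties broken arbitrarily, i.e. any such choice).\<close>
definition valid_choice :: "'a set \<Rightarrow> ('a \<Rightarrow> 'a \<Rightarrow> real) \<Rightarrow> 'a set set \<Rightarrow> ('a set \<Rightarrow> 'a) \<Rightarrow> bool" where
  "valid_choice S d E' c \<longleftrightarrow> (\<forall>a b. {a, b} \<in> E' \<longrightarrow>
      c {a, b} \<in> S - {a, b} \<and>
      (\<forall>x\<in>S - {a, b}. d a (c {a, b}) + d (c {a, b}) b \<le> d a x + d x b))"

definition construct_f1 :: "'a set set \<Rightarrow> ('a set \<Rightarrow> 'a) \<Rightarrow> 'a set set" where
  "construct_f1 E' c = E' \<union> {{a, c {a, b}} | a b. {a, b} \<in> E'} \<union> {{c {a, b}, b} | a b. {a, b} \<in> E'}"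

definition is_matching :: "'a set set \<Rightarrow> bool" where
  "is_matching F \<longleftrightarrow> (\<forall>e1\<in>F. \<forall>e2\<in>F. e1 \<inter> e2 \<noteq> {} \<longrightarrow> e1 = e2)"

end

theory Submission imports Defs begin

lemma walk_len_Cons2: "walk_len d (a#b#xs) = d a b + walk_len d (b#xs)"
proof -
  have "walk_len d (a#b#xs) = (\<Sum>i<Suc (length xs). d ((a#b#xs)!i) ((a#b#xs)!Suc i))"
    by (simp add: walk_len_def)
  also have "\<dots> = d a b + (\<Sum>i<length xs. d ((a#b#xs)!Suc i) ((a#b#xs)!Suc (Suc i)))"
    unfolding sum.lessThan_Suc_shift by simp
  also have "\<dots> = d a b + walk_len d (b#xs)" by (simp add: walk_len_def)
  finally show ?thesis .
qed

lemma walk_len_single[simp]: "walk_len d [a] = 0"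
  unfolding walk_len_def by simp

lemma walk_single[simp]: "walk S E [a] \<longleftrightarrow> a \<in> S"
  unfolding walk_def by simp

lemma walk_Cons2: "walk S E (a#b#xs) \<longleftrightarrow> a \<in> S \<and> {a,b} \<in> E \<and> walk S E (b#xs)"
proof
  assume h: "walk S E (a#b#xs)"
  have "{a,b} \<in> E" using h unfolding walk_def by (metis length_Cons nth_Cons_0 nth_Cons_Suc zero_less_Suc Suc_less_eq)
  moreover have "\<forall>i. Suc i < length (b#xs) \<longrightarrow> {(b#xs) ! i, (b#xs) ! Suc i} \<in> E"
  proof (intro allI impI)
    fix i assume "Suc i < length (b#xs)"
    then have "Suc (Suc i) < length (a#b#xs)" by simp
    then show "{(b#xs) ! i, (b#xs) ! Suc i} \<in> E" using h unfolding walk_def by (metis nth_Cons_Suc)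
  qed
  ultimately show "a \<in> S \<and> {a,b} \<in> E \<and> walk S E (b#xs)" using h unfolding walk_def by auto
next
  assume h: "a \<in> S \<and> {a,b} \<in> E \<and> walk S E (b#xs)"
  show "walk S E (a#b#xs)" unfolding walk_def
  proof (intro conjI allI impI)
    show "set (a#b#xs) \<subseteq> S" using h unfolding walk_def by auto
    fix i assume "Suc i < length (a#b#xs)"
    then show "{(a#b#xs) ! i, (a#b#xs) ! Suc i} \<in> E"
    proof (cases i)
      case 0 then show ?thesis using h by simp
    next
      case (Suc j)
      then have "Suc j < length (b#xs)" using \<open>Suc i < _\<close> by simp
      then show ?thesis using h Suc unfolding walk_def by simp
    qed
  qed simp
qed

locale spctx =
  fixes S :: "'a set" and d :: "'a \<Rightarrow> 'a \<Rightarrow> real" and E' F :: "'a set set" and c :: "'a set \<Rightarrow> 'a"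
  assumes met: "metric_on S d" and vc: "valid_choice S d E' c"
    and FG: "F \<subseteq> construct_f1 E' c" and mat: "is_matching F"
begin

lemma tri: "x \<in> S \<Longrightarrow> y \<in> S \<Longrightarrow> z \<in> S \<Longrightarrow> d x z \<le> d x y + d y z"
  using met unfolding metric_on_def by blast
lemma sym: "x \<in> S \<Longrightarrow> y \<in> S \<Longrightarrow> d x y = d y x"
  using met unfolding metric_on_def by blast
lemma nonneg: "x \<in> S \<Longrightarrow> y \<in> S \<Longrightarrow> d x y \<ge> 0"
  using met unfolding metric_on_def by blast

lemma cfacts: assumes "{a,b} \<in> E'"
  shows "c {a,b} \<in> S" "c {a,b} \<noteq> a" "c {a,b} \<noteq> b"
    "\<And>x. x \<in> S \<Longrightarrow> x \<noteq> a \<Longrightarrow> x \<noteq> b \<Longrightarrow> d a (c {a,b}) + d (c {a,b}) b \<le> d a x + d x b"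
  using vc assms unfolding valid_choice_def by blast+

lemma cedges: assumes "{a,b} \<in> E'"
  shows "{a, c {a,b}} \<in> construct_f1 E' c" "{c {a,b}, b} \<in> construct_f1 E' c"
  using assms unfolding construct_f1_def by blast+

lemma Esub: "e \<in> E' \<Longrightarrow> e \<in> construct_f1 E' c"
  unfolding construct_f1_def by blast

lemma matchD: "e \<in> F \<Longrightarrow> e' \<in> F \<Longrightarrow> x \<in> e \<Longrightarrow> x \<in> e' \<Longrightarrow> e = e'"
  using mat unfolding is_matching_def by blast

lemma cross:
  assumes "{a,b} \<in> E'" "{a,b} \<in> F" "a \<in> S" "b \<in> S"
  shows "walk S (construct_f1 E' c - F) [a, c {a,b}, b]"
proof -
  note cf = cfacts[OF assms(1)]
  have 1: "{a, c {a,b}} \<notin> F"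
  proof
    assume "{a, c {a,b}} \<in> F"
    then have "{a, c {a,b}} = {a,b}" using matchD assms(2) by blast
    then show False using cf(2,3) by (metis doubleton_eq_iff)
  qed
  have 2: "{c {a,b}, b} \<notin> F"
  proof
    assume "{c {a,b}, b} \<in> F"
    then have "{c {a,b}, b} = {a,b}" using matchD assms(2) by blast
    then show False using cf(2,3) by (metis doubleton_eq_iff)
  qed
  show ?thesis using 1 2 cedges[OF assms(1)] cf(1) assms by (simp add: walk_Cons2)
qed


lemma prepend: "W \<noteq> [] \<Longrightarrow> hd W = b \<Longrightarrow> walk S' E (a#W) \<longleftrightarrow> a \<in> S' \<and> {a,b} \<in> E \<and> walk S' E W"
  by (cases W) (auto simp: walk_Cons2)
lemma prepend_len: "W \<noteq> [] \<Longrightarrow> hd W = b \<Longrightarrow> walk_len d (a#W) = d a b + walk_len d W"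
  by (cases W) (auto simp: walk_len_Cons2)

lemma pair1:
  assumes "{a,b} \<in> E'" "{a,b} \<in> F" "{b,x} \<in> E'" "{b,x} \<notin> F" "a \<in> S" "b \<in> S" "x \<in> S" "x \<noteq> a" "x \<noteq> b"
  shows "walk S (construct_f1 E' c - F) [a, c {a,b}, b, x] \<and> walk_len d [a, c {a,b}, b, x] \<le> 3 * (d a b + d b x)"
proof -
  note cf = cfacts[OF assms(1)]
  have w: "walk S (construct_f1 E' c - F) [a, c {a,b}, b]" using cross assms by blast
  have "walk S (construct_f1 E' c - F) [a, c {a,b}, b, x]"
    using w assms Esub by (simp add: walk_Cons2)
  moreover have "d a (c {a,b}) + d (c {a,b}) b \<le> d a x + d x b" using cf(4) assms by blast
  moreover have "d a x \<le> d a b + d b x" using tri assms by blast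
  moreover have "d x b = d b x" using sym assms by blast
  moreover have "d b x \<ge> 0" using nonneg assms by blast
  moreover have "d a b \<ge> 0" using nonneg assms by blast
  ultimately show ?thesis by (simp add: walk_len_Cons2)
qed

lemma pair2:
  assumes "{a,b} \<in> E'" "{a,b} \<notin> F" "{b,x} \<in> E'" "{b,x} \<in> F" "a \<in> S" "b \<in> S" "x \<in> S" "x \<noteq> a" "b \<noteq> a"
  shows "walk S (construct_f1 E' c - F) [a, b, c {b,x}, x] \<and> walk_len d [a, b, c {b,x}, x] \<le> 3 * (d a b + d b x)"
proof -
  note cf = cfacts[OF assms(3)]
  have w: "walk S (construct_f1 E' c - F) [b, c {b,x}, x]" using cross assms by blast
  have "walk S (construct_f1 E' c - F) [a, b, c {b,x}, x]"
    using w assms Esub by (simp add: walk_Cons2)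
  moreover have "d b (c {b,x}) + d (c {b,x}) x \<le> d b a + d a x" using cf(4) assms by blast
  moreover have "d a x \<le> d a b + d b x" using tri assms by blast
  moreover have "d a b = d b a" using sym assms by blast
  moreover have "d b x \<ge> 0" using nonneg assms by blast
  moreover have "d a b \<ge> 0" using nonneg assms by blast
  ultimately show ?thesis by (simp add: walk_len_Cons2)
qed

lemma triple:
  assumes "{w,x} \<in> E'" "{w,x} \<in> F" "{x,y} \<in> E'" "{x,y} \<notin> F" "{y,z} \<in> E'" "{y,z} \<in> F"
    "w \<in> S" "x \<in> S" "y \<in> S" "z \<in> S"
    "w \<noteq> x" "w \<noteq> y" "w \<noteq> z" "x \<noteq> y" "x \<noteq> z" "y \<noteq> z"
  shows "\<exists>W. walk S (construct_f1 E' c - F) W \<and> hd W = w \<and> last W = z \<and>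
     walk_len d W \<le> 3 * (d w x + d x y + d y z)"
proof -
  define u where "u = c {x,y}"
  note cu = cfacts[OF assms(3), folded u_def]
  note c1 = cfacts[OF assms(1)]
  note c3 = cfacts[OF assms(5)]
  have w1: "walk S (construct_f1 E' c - F) [w, c {w,x}, x]" using cross assms by blast
  have w3: "walk S (construct_f1 E' c - F) [y, c {y,z}, z]" using cross assms by blast
  have s: "\<And>p q. p \<in> S \<Longrightarrow> q \<in> S \<Longrightarrow> d p q = d q p" using sym by blast
  have t: "\<And>p q r. p \<in> S \<Longrightarrow> q \<in> S \<Longrightarrow> r \<in> S \<Longrightarrow> d p r \<le> d p q + d q r" using tri by blast
  have n: "\<And>p q. p \<in> S \<Longrightarrow> q \<in> S \<Longrightarrow> d p q \<ge> 0" using nonneg by blast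
  consider "u = w" | "u = z" | "u \<noteq> w" "u \<noteq> z" by blast
  then show ?thesis
  proof cases
    case 1
    have e: "{w,y} \<in> construct_f1 E' c" using cedges(2)[OF assms(3)] 1 u_def by simp
    have ne: "{w,y} \<notin> F"
    proof
      assume "{w,y} \<in> F"
      then have "{w,y} = {w,x}" using matchD assms(2) by blast
      then show False using assms by (metis doubleton_eq_iff)
    qed
    let ?W = "[w, y, c {y,z}, z]"
    have "walk S (construct_f1 E' c - F) ?W" using w3 e ne assms by (simp add: walk_Cons2)
    moreover have "d y (c {y,z}) + d (c {y,z}) z \<le> d y x + d x z" using c3(4) assms by blast
    moreover have "d w y \<le> d w x + d x y" using t assms by blast
    moreover have "d x z \<le> d x y + d y z" using t assms by blast
    moreover have "d y x = d x y" using s assms by blast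
    moreover have "d w x \<ge> 0" "d x y \<ge> 0" "d y z \<ge> 0" using n assms by blast+
    ultimately show ?thesis by (intro exI[of _ ?W]) (simp add: walk_Cons2 walk_len_Cons2)
  next
    case 2
    have e: "{x,z} \<in> construct_f1 E' c" using cedges(1)[OF assms(3)] 2 u_def by simp
    have ne: "{x,z} \<notin> F"
    proof
      assume "{x,z} \<in> F"
      then have "{x,z} = {y,z}" using matchD assms(6) by blast
      then show False using assms by (metis doubleton_eq_iff)
    qed
    let ?W = "[w, c {w,x}, x, z]"
    have "walk S (construct_f1 E' c - F) ?W" using w1 e ne assms by (simp add: walk_Cons2)
    moreover have "d w (c {w,x}) + d (c {w,x}) x \<le> d w y + d y x" using c1(4) assms by blast
    moreover have "d w y \<le> d w x + d x y" using t assms by blast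
    moreover have "d x z \<le> d x y + d y z" using t assms by blast
    moreover have "d y x = d x y" using s assms by blast
    moreover have "d w x \<ge> 0" "d x y \<ge> 0" "d y z \<ge> 0" using n assms by blast+
    ultimately show ?thesis by (intro exI[of _ ?W]) (simp add: walk_Cons2 walk_len_Cons2)
  next
    case 3
    let ?W = "[w, c {w,x}, x, y, c {y,z}, z]"
    have "walk S (construct_f1 E' c - F) ?W" using w1 w3 assms Esub by (simp add: walk_Cons2)
    moreover have "d w (c {w,x}) + d (c {w,x}) x \<le> d w u + d u x" using c1(4) cu(1,2,3) 3 assms by blast
    moreover have "d y (c {y,z}) + d (c {y,z}) z \<le> d y u + d u z" using c3(4) cu(1,2,3) 3 assms by blast
    moreover have "d x u + d u y \<le> d x w + d w y" using cu(4) assms by blast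
    moreover have "d x u + d u y \<le> d x z + d z y" using cu(4) assms by blast
    moreover have "d w u \<le> d w x + d x u" using t assms cu(1) by blast
    moreover have "d u z \<le> d u y + d y z" using t assms cu(1) by blast
    moreover have "d w y \<le> d w x + d x y" using t assms by blast
    moreover have "d x z \<le> d x y + d y z" using t assms by blast
    moreover have "d y u = d u y" "d u x = d x u" "d x w = d w x" "d z y = d y z" using s assms cu(1) by blast+
    moreover have "d w x \<ge> 0" "d x y \<ge> 0" "d y z \<ge> 0" using n assms by blast+
    ultimately show ?thesis by (intro exI[of _ ?W]) (simp add: walk_Cons2 walk_len_Cons2; linarith)
  qed
qed


lemma main:
  assumes "walk S E' xs" "distinct xs" "2 \<le> length xs" "length xs = 2 \<longrightarrow> {xs!0, xs!1} \<notin> F"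
  shows "\<exists>W. walk S (construct_f1 E' c - F) W \<and> hd W = hd xs \<and> last W = last xs \<and>
     walk_len d W \<le> 3 * walk_len d xs"
  using assms
proof (induction xs rule: length_induct)
  case (1 xs)
  note IH = 1(1)
  obtain a b rest where xs: "xs = a#b#rest" using 1(4)
    by (metis One_nat_def Suc_1 Suc_le_length_iff)
  have a: "a \<in> S" "{a,b} \<in> E'" "walk S E' (b#rest)" using 1(2) xs by (auto simp: walk_Cons2)
  have b: "b \<in> S" using a(3) unfolding walk_def by simp
  have ab: "a \<noteq> b" using 1(3) xs by simp
  have nab: "d a b \<ge> 0" using nonneg a b by blast
  show ?case
  proof (cases rest)
    case Nil
    have "{a,b} \<notin> F" using 1(5) xs Nil by simp
    then show ?thesis using xs Nil a b nab Esub
      by (intro exI[of _ "[a,b]"]) (simp add: walk_Cons2 walk_len_Cons2)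
  next
    case (Cons x rest2)
    have bx: "{b,x} \<in> E'" "walk S E' (x#rest2)" using a(3) Cons by (auto simp: walk_Cons2)
    have x: "x \<in> S" using bx(2) unfolding walk_def by simp
    have dist: "a \<noteq> x" "b \<noteq> x" using 1(3) xs Cons by auto
    have nbx: "d b x \<ge> 0" using nonneg x b by blast
    have lenxs: "walk_len d xs = d a b + walk_len d (b#x#rest2)" using xs Cons by (simp add: walk_len_Cons2)
    show ?thesis
    proof (cases "{a,b} \<in> F")
      case False
      show ?thesis
      proof (cases "rest2 = [] \<and> {b,x} \<in> F")
        case True
        then show ?thesis
          using pair2[OF a(2) False bx(1) _ a(1) b x] True dist ab xs Cons
          by (intro exI[of _ "[a, b, c {b,x}, x]"]) (simp add: walk_len_Cons2)
      next
        case False2: False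
        have "\<exists>W. walk S (construct_f1 E' c - F) W \<and> hd W = hd (b#x#rest2) \<and> last W = last (b#x#rest2) \<and>
          walk_len d W \<le> 3 * walk_len d (b#x#rest2)"
          apply (rule IH[rule_format])
          using xs Cons 1(3) a(3) False2 by auto
        then obtain W where W: "walk S (construct_f1 E' c - F) W" "hd W = b" "last W = last xs"
          "walk_len d W \<le> 3 * walk_len d (b#x#rest2)" using xs Cons by auto
        have Wne: "W \<noteq> []" using W(1) unfolding walk_def by simp
        show ?thesis
          apply (intro exI[of _ "a#W"])
          using W Wne prepend[OF Wne W(2)] prepend_len[OF Wne W(2)] a(1) Esub[OF a(2)] False lenxs nab xs
          by simp
      qed
    next
      case True
      have nbxF: "{b,x} \<notin> F"
      proof
        assume "{b,x} \<in> F"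
        then have "{b,x} = {a,b}" using matchD True by blast
        then show False using dist by (metis doubleton_eq_iff)
      qed
      note P1 = pair1[OF a(2) True bx(1) nbxF a(1) b x dist[symmetric]]
      show ?thesis
      proof (cases rest2)
        case Nil
        then show ?thesis using P1 xs Cons
          by (intro exI[of _ "[a, c {a,b}, b, x]"]) (simp add: walk_len_Cons2)
      next
        case Cons2: (Cons y rest3)
        have xy: "{x,y} \<in> E'" "walk S E' (y#rest3)" using bx(2) Cons2 by (auto simp: walk_Cons2)
        have y: "y \<in> S" using xy(2) unfolding walk_def by simp
        have disty: "a \<noteq> y" "b \<noteq> y" "x \<noteq> y" using 1(3) xs Cons Cons2 by auto
        have lenxs2: "walk_len d xs = d a b + d b x + walk_len d (x#y#rest3)"
          using xs Cons Cons2 by (simp add: walk_len_Cons2)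
        show ?thesis
        proof (cases "{x,y} \<in> F \<and> rest3 = []")
          case True3: True
          obtain W where "walk S (construct_f1 E' c - F) W" "hd W = a" "last W = y"
            "walk_len d W \<le> 3 * (d a b + d b x + d x y)"
            using triple[OF a(2) True bx(1) nbxF xy(1) _ a(1) b x y ab] True3 dist disty by blast
          then show ?thesis using xs Cons Cons2 True3 by (intro exI[of _ W]) (simp add: walk_len_Cons2)
        next
          case False3: False
          have "\<exists>W. walk S (construct_f1 E' c - F) W \<and> hd W = hd (x#y#rest3) \<and> last W = last (x#y#rest3) \<and>
            walk_len d W \<le> 3 * walk_len d (x#y#rest3)"
            apply (rule IH[rule_format])
            using xs Cons Cons2 1(3) bx(2) False3 by auto
          then obtain W where W: "walk S (construct_f1 E' c - F) W" "hd W = x" "last W = last xs"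
            "walk_len d W \<le> 3 * walk_len d (x#y#rest3)" using xs Cons Cons2 by auto
          have Wne: "W \<noteq> []" using W(1) unfolding walk_def by simp
          have w1: "walk S (construct_f1 E' c - F) (b#W)"
            using prepend[OF Wne W(2)] W(1) b nbxF Esub[OF bx(1)] by simp
          have l1: "walk_len d (b#W) = d b x + walk_len d W" using prepend_len[OF Wne W(2)] .
          have w2: "walk S (construct_f1 E' c - F) (a # c {a,b} # b # W)"
            using w1 P1 by (simp add: walk_Cons2)
          have l2: "walk_len d (a # c {a,b} # b # W) = d a (c {a,b}) + d (c {a,b}) b + walk_len d (b#W)"
            by (simp add: walk_len_Cons2)
          show ?thesis
            apply (intro exI[of _ "a # c {a,b} # b # W"])
            using w2 l1 l2 W P1 lenxs2 xs Wne by (simp add: walk_len_Cons2)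
        qed
      qed
    qed
  qed
qed
end


theorem lemma1:
  fixes S :: "'a set" and d :: "'a \<Rightarrow> 'a \<Rightarrow> real" and t :: real
    and E' F :: "'a set set" and c :: "'a set \<Rightarrow> 'a" and p q :: 'a and P :: "'a list"
  assumes "finite S" and "card S \<ge> 3" and "metric_on S d" and "t \<ge> 1"
    and "graph_on S E'" and "is_spanner S E' d t"
    and "valid_choice S d E' c"
    and "F \<subseteq> construct_f1 E' c" and "is_matching F"
    and "p \<in> S" and "q \<in> S"
    and "shortest_path S E' d p q P"
    and "\<exists>i. Suc i < length P \<and> {P ! i, P ! Suc i} \<in> F"
    and "length P \<ge> 3"
  shows "\<exists>W. walk_between S (construct_f1 E' c - F) p q W \<and> walk_len d W \<le> 3 * walk_len d P"
proof -
  interpret spctx S d E' F c using assms by unfold_locales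
  have "walk S E' P" "distinct P" "hd P = p" "last P = q"
    using assms(12) unfolding shortest_path_def walk_between_def by auto
  then show ?thesis using main[of P] assms(14) unfolding walk_between_def by auto
qed

end
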